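(* Let $\Omega\subset\mathbb{R}^2$ be a convex polygon with $m$ sides, let $p\in\operatorname{int}\Omega$ and $r>0$. Then the Thompson ball $B_T(p,r)$ equals $B_F(p,r)\cap B_{rF}(p,r)$, and it is a convex polygon with at most $2m$ sides.
   Context: For distinct $p,q\in\operatorname{int}\Omega$, let $q'$ be the point where the ray from $p$ through $q$ meets $\partial\Omega$. The Funk weak metric is $F_\Omega(p,q)=\ln\frac{\|p-q'\|}{\|q-q'\|}$, with $F_\Omega(p,p)=0$. The reverse Funk metric is $rF_\Omega(p,q)=F_\Omega(q,p)$. The Thompson metric is $T_\Omega(p,q)=\max(F_\Omega(p,q),rF_\Omega(p,q))$. For a function $D\in\{F_\Omega,rF_\Omega,T_\Omega\}$, the ball of radius $r$ about $p$ is $B_D(p,r)=\{q\in\operatorname{int}\Omega: D(p,q)\le r\}$; these are written $B_F$, $B_{rF}$, $B_T$ respectively. *)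

theory Defs
  imports "HOL-Analysis.Analysis"
begin

definition convex_polygon :: "(real^2) set \<Rightarrow> nat \<Rightarrow> bool" where
  "convex_polygon K n \<longleftrightarrow> polytope K \<and> aff_dim K = 2 \<and> card {F. F facet_of K} = n"

definition ray_exit :: "(real^2) set \<Rightarrow> real^2 \<Rightarrow> real^2 \<Rightarrow> real^2" where
  "ray_exit \<Omega> p q = (THE x. x \<in> frontier \<Omega> \<and> (\<exists>t>0. x = p + t *\<^sub>R (q - p)))"

definition funk :: "(real^2) set \<Rightarrow> real^2 \<Rightarrow> real^2 \<Rightarrow> real" where
  "funk \<Omega> p q = (if p = q then 0
     else ln (norm (p - ray_exit \<Omega> p q) / norm (q - ray_exit \<Omega> p q)))"

definition reverse_funk :: "(real^2) set \<Rightarrow> real^2 \<Rightarrow> real^2 \<Rightarrow> real" where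
  "reverse_funk \<Omega> p q = funk \<Omega> q p"

definition thompson :: "(real^2) set \<Rightarrow> real^2 \<Rightarrow> real^2 \<Rightarrow> real" where
  "thompson \<Omega> p q = max (funk \<Omega> p q) (reverse_funk \<Omega> p q)"

definition dball :: "(real^2) set \<Rightarrow> ((real^2) set \<Rightarrow> real^2 \<Rightarrow> real^2 \<Rightarrow> real)
    \<Rightarrow> real^2 \<Rightarrow> real \<Rightarrow> (real^2) set" where
  "dball \<Omega> D p r = {q \<in> interior \<Omega>. D \<Omega> p q \<le> r}"

end

theory Submission
  imports Defs
begin

lemma minimal_subset_ex:
  assumes "finite H" "P H"
  shows "\<exists>H'\<subseteq>H. P H' \<and> (\<forall>H''. H'' \<subset> H' \<longrightarrow> \<not> P H'')"
  using assms
proof (induction H rule: finite_psubset_induct)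
  case (psubset A)
  show ?case
  proof (cases "\<exists>B. B \<subset> A \<and> P B")
    case True
    then obtain B where B: "B \<subset> A" "P B" by blast
    from psubset.IH[OF B] obtain H' where "H' \<subseteq> B" "P H'" "\<forall>H''. H'' \<subset> H' \<longrightarrow> \<not> P H''"
      by blast
    moreover have "H' \<subseteq> A" using \<open>H' \<subseteq> B\<close> B(1) by (meson psubset_imp_subset subset_trans)
    ultimately show ?thesis by (intro exI[of _ H']) simp
  next
    case False
    then show ?thesis using psubset.prems by (intro exI[of _ A]) simp
  qed
qed

lemma facets_card_le:
  fixes S :: "'a::euclidean_space set"
  assumes fin: "finite H" and seq: "S = affine hull S \<inter> \<Inter>H"
    and hs: "\<forall>h\<in>H. \<exists>a b. a \<noteq> 0 \<and> h = {x. a \<bullet> x \<le> b}"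
  shows "card {C. C facet_of S} \<le> card H"
proof -
  obtain H' where H': "H' \<subseteq> H" "S = affine hull S \<inter> \<Inter>H'"
    and min0: "\<forall>H''. H'' \<subset> H' \<longrightarrow> S \<noteq> affine hull S \<inter> \<Inter>H''"
    using minimal_subset_ex[of H "\<lambda>G. S = affine hull S \<inter> \<Inter>G", OF fin seq]
    by (elim exE conjE) (rule that)
  have min: "S \<noteq> affine hull S \<inter> \<Inter>H''" if "H'' \<subset> H'" for H''
    using min0 that by simp
  have finH': "finite H'" using H'(1) fin by (rule finite_subset)
  obtain a b where ab: "\<And>h. h \<in> H' \<Longrightarrow> a h \<noteq> 0 \<and> h = {x. a h \<bullet> x \<le> b h}"
  proof -
    have hs': "\<forall>h\<in>H'. \<exists>a b. a \<noteq> 0 \<and> h = {x. a \<bullet> x \<le> b}"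
    proof
      fix h assume "h \<in> H'"
      then have "h \<in> H" using H'(1) by blast
      with hs show "\<exists>a b. a \<noteq> 0 \<and> h = {x. a \<bullet> x \<le> b}" by (rule bspec)
    qed
    from bchoice[OF hs'] obtain a where "\<forall>h\<in>H'. \<exists>b. a h \<noteq> 0 \<and> h = {x. a h \<bullet> x \<le> b}"
      by (elim exE)
    from bchoice[OF this] obtain b where "\<forall>h\<in>H'. a h \<noteq> 0 \<and> h = {x. a h \<bullet> x \<le> b h}"
      by (elim exE)
    then show ?thesis by (intro that) (erule bspec)
  qed
  have psub: "S \<subset> affine hull S \<inter> \<Inter>F'" if "F' \<subset> H'" for F'
  proof -
    have s1: "S \<subseteq> affine hull S" by (rule hull_subset)
    have s2: "S \<subseteq> \<Inter>H'" using H'(2) Int_lower2 by (rule ord_eq_le_trans)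
    have s3: "\<Inter>H' \<subseteq> \<Inter>F'" using that by (intro Inter_anti_mono) (rule psubset_imp_subset)
    have "S \<subseteq> affine hull S \<inter> \<Inter>F'" using s1 s2 s3 by (meson Int_greatest subset_trans)
    then show ?thesis using min[OF that] by (rule psubsetI)
  qed
  have "{C. C facet_of S} = (\<lambda>h. S \<inter> {x. a h \<bullet> x = b h}) ` H'"
    by (rule set_eqI) (simp only: mem_Collect_eq image_iff facet_of_polyhedron_explicit[OF finH' H'(2) ab psub] Bex_def)
  then have "card {C. C facet_of S} \<le> card H'"
    by (simp add: card_image_le finH')
  also have "\<dots> \<le> card H" using fin H'(1) by (rule card_mono)
  finally show ?thesis .
qed

lemma facet_rep:
  fixes S :: "'a::euclidean_space set"
  assumes "polyhedron S" "S \<noteq> {}"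
  obtains H where "finite H" "S = affine hull S \<inter> \<Inter>H"
    "\<forall>h\<in>H. \<exists>a b. a \<noteq> 0 \<and> h = {x. a \<bullet> x \<le> b}" "card H \<le> card {C. C facet_of S}"
proof -
  obtain F where finF: "finite F" and seq: "S = affine hull S \<inter> \<Inter>F"
    and hs: "\<forall>h\<in>F. \<exists>a b. a \<noteq> 0 \<and> h = {x. a \<bullet> x \<le> b}"
    and psub0: "\<forall>F'. F' \<subset> F \<longrightarrow> S \<subset> affine hull S \<inter> \<Inter>F'"
    using assms(1) unfolding polyhedron_Int_affine_minimal by (elim exE conjE) (rule that)
  have psub: "S \<subset> affine hull S \<inter> \<Inter>F'" if "F' \<subset> F" for F'
    using psub0 that by simp
  obtain a b where ab: "\<And>h. h \<in> F \<Longrightarrow> a h \<noteq> 0 \<and> h = {x. a h \<bullet> x \<le> b h}"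
  proof -
    from bchoice[OF hs] obtain a where "\<forall>h\<in>F. \<exists>b. a h \<noteq> 0 \<and> h = {x. a h \<bullet> x \<le> b}"
      by (elim exE)
    from bchoice[OF this] obtain b where "\<forall>h\<in>F. a h \<noteq> 0 \<and> h = {x. a h \<bullet> x \<le> b h}"
      by (elim exE)
    then show ?thesis by (intro that) (erule bspec)
  qed
  have mem: "y \<in> h \<longleftrightarrow> a h \<bullet> y \<le> b h" if "h \<in> F" for h y
  proof -
    have e: "h = {x. a h \<bullet> x \<le> b h}" using ab[OF that] by (rule conjunct2)
    have "(y \<in> h) = (y \<in> {x. a h \<bullet> x \<le> b h})" using e by (rule arg_cong[where f="\<lambda>S. y \<in> S"])
    then show ?thesis by simp
  qed
  define g where "g h = S \<inter> {x. a h \<bullet> x = b h}" for h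
  have img: "{C. C facet_of S} = g ` F"
    unfolding g_def
    by (rule set_eqI) (simp only: mem_Collect_eq image_iff facet_of_polyhedron_explicit[OF finF seq ab psub] Bex_def)
  have cS: "convex S" using assms(1) by (rule polyhedron_imp_convex)
  have "rel_interior S \<noteq> {}" using assms(2) by (simp add: rel_interior_eq_empty[OF cS])
  then obtain x where x: "x \<in> rel_interior S" by blast
  have ri: "rel_interior S = {x \<in> S. \<forall>h \<in> F. a h \<bullet> x < b h}"
    by (rule rel_interior_polyhedron_explicit [OF finF seq ab psub])
  have xS: "x \<in> S" and xlt: "\<And>h. h \<in> F \<Longrightarrow> a h \<bullet> x < b h"
    using x unfolding ri by auto
  have inj: "inj_on g F"
  proof (rule inj_onI, rule ccontr)
    fix h1 h2 assume h1: "h1 \<in> F" and h2: "h2 \<in> F" and geq: "g h1 = g h2" and ne: "h1 \<noteq> h2"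
    have "F - {h1} \<subset> F" using h1 by blast
    from psubset_imp_ex_mem[OF psub[OF this]] obtain z
      where "z \<in> (affine hull S \<inter> \<Inter>(F - {h1})) - S" by (elim exE)
    then have zaff: "z \<in> affine hull S" and zint: "z \<in> \<Inter>(F - {h1})"
      and zS: "z \<notin> S" by (simp_all only: Diff_iff Int_iff not_False_eq_True)
    have "z \<notin> h1"
    proof
      assume "z \<in> h1"
      then have "z \<in> \<Inter>F" using zint by blast
      then have "z \<in> affine hull S \<inter> \<Inter>F" using zaff by (rule IntI[rotated])
      then have "z \<in> S" by (subst seq)
      then show False using zS by contradiction
    qed
    then have z1: "a h1 \<bullet> z > b h1" using mem[OF h1] by auto
    have zle: "a h \<bullet> z \<le> b h" if "h \<in> F - {h1}" for h
    proof -
      have "z \<in> h" using zint that by (rule InterD)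
      then show ?thesis using mem[of h z] that by simp
    qed
    define t where "t = (b h1 - a h1 \<bullet> x) / (a h1 \<bullet> z - a h1 \<bullet> x)"
    have x1: "a h1 \<bullet> x < b h1" using h1 by (rule xlt)
    have t0: "0 < t" using x1 z1 unfolding t_def by (intro divide_pos_pos) simp_all
    have t1: "t < 1" using x1 z1 unfolding t_def by (simp add: divide_less_eq)
    define w where "w = (1 - t) *\<^sub>R x + t *\<^sub>R z"
    have w1: "a h1 \<bullet> w = b h1"
    proof -
      have ne0: "a h1 \<bullet> z - a h1 \<bullet> x \<noteq> 0" using x1 z1 by simp
      have e1: "a h1 \<bullet> w = (1 - t) * (a h1 \<bullet> x) + t * (a h1 \<bullet> z)"
        by (simp add: w_def inner_add_right)
      have e2: "(1 - t) * (a h1 \<bullet> x) + t * (a h1 \<bullet> z) = a h1 \<bullet> x + t * (a h1 \<bullet> z - a h1 \<bullet> x)"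
        by (simp add: algebra_simps)
      have e3: "t * (a h1 \<bullet> z - a h1 \<bullet> x) = b h1 - a h1 \<bullet> x"
        using ne0 by (simp add: t_def)
      show ?thesis using e1 e2 e3 by linarith
    qed
    have wlt: "a h \<bullet> w < b h" if "h \<in> F - {h1}" for h
    proof -
      have hF: "h \<in> F" using that by blast
      have e1: "a h \<bullet> w = (1 - t) * (a h \<bullet> x) + t * (a h \<bullet> z)"
        by (simp add: w_def inner_add_right)
      have i1: "(1 - t) * (a h \<bullet> x) < (1 - t) * b h"
        using xlt[OF hF] t1 by (intro mult_strict_left_mono) simp_all
      have i2: "t * (a h \<bullet> z) \<le> t * b h"
        using zle[OF that] t0 by (intro mult_left_mono) simp_all
      have "(1 - t) * b h + t * b h = b h" by (simp add: algebra_simps)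
      with e1 i1 i2 show ?thesis by linarith
    qed
    have xaff: "x \<in> affine hull S" using xS by (rule hull_inc)
    have waff: "w \<in> affine hull S"
      unfolding w_def by (rule mem_affine[OF affine_affine_hull xaff zaff]) simp
    have wh: "w \<in> h" if hF: "h \<in> F" for h
    proof -
      have "a h \<bullet> w \<le> b h"
      proof (cases "h = h1")
        case True
        then show ?thesis using w1 by simp
      next
        case False
        then have "h \<in> F - {h1}" using hF by blast
        then show ?thesis using wlt[of h] by simp
      qed
      then show ?thesis using mem[OF hF] by simp
    qed
    have "w \<in> \<Inter>F" using wh by (rule InterI)
    then have "w \<in> affine hull S \<inter> \<Inter>F" using waff by (rule IntI[rotated])
    then have "w \<in> S" by (subst seq)
    then have "w \<in> g h1" using w1 by (simp add: g_def)
    then have "w \<in> g h2" using geq by simp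
    then have "a h2 \<bullet> w = b h2" by (simp add: g_def)
    moreover have "h2 \<in> F - {h1}" using h2 ne by blast
    then have "a h2 \<bullet> w < b h2" by (rule wlt)
    ultimately show False by simp
  qed
  have "card (g ` F) = card F" by (rule card_image[OF inj])
  then have "card F = card {C. C facet_of S}" by (simp only: img)
  then show ?thesis using that[OF finF seq hs] by simp
qed


lemma ray_exit_char:
  fixes \<Omega> :: "(real^2) set"
  assumes cvx: "convex \<Omega>" and cpt: "compact \<Omega>" and x: "x \<in> interior \<Omega>"
    and y: "y \<in> interior \<Omega>" and xy: "x \<noteq> y"
  obtains T where "T > 1" "ray_exit \<Omega> x y = x + T *\<^sub>R (y - x)"
    "\<And>t. 0 \<le> t \<Longrightarrow> x + t *\<^sub>R (y - x) \<in> \<Omega> \<longleftrightarrow> t \<le> T"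
proof -
  define g where "g t = x + t *\<^sub>R (y - x)" for t
  define St where "St = {t. 0 \<le> t \<and> g t \<in> \<Omega>}"
  have clO: "closed \<Omega>" using cpt by (rule compact_imp_closed)
  have d: "norm (y - x) > 0" using xy by simp
  have contg: "continuous_on UNIV g" unfolding g_def by (intro continuous_intros)
  have "St = {0..} \<inter> g -` \<Omega>" by (auto simp: St_def)
  then have clSt: "closed St" using closed_vimage[OF clO contg] by (simp add: closed_Int)
  obtain B where B: "\<And>z. z \<in> \<Omega> \<Longrightarrow> norm z \<le> B"
    using compact_imp_bounded[OF cpt] bounded_iff by metis
  have xO: "x \<in> \<Omega>" using x interior_subset by blast
  have Stb: "t \<le> 2 * B / norm (y - x)" if "t \<in> St" for t
  proof -
    have t0: "0 \<le> t" and gt: "g t \<in> \<Omega>" using that by (auto simp: St_def)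
    have "t * norm (y - x) = norm (g t - x)" using t0 by (simp add: g_def)
    also have "\<dots> \<le> norm (g t) + norm x" by (rule norm_triangle_ineq4)
    also have "\<dots> \<le> 2 * B" using B[OF gt] B[OF xO] by simp
    finally show ?thesis using d by (simp add: pos_le_divide_eq)
  qed
  have St0: "0 \<in> St" using xO by (simp add: St_def g_def)
  have bdd: "bdd_above St" using Stb by (rule bdd_aboveI)
  define T where "T = Sup St"
  have TSt: "T \<in> St" unfolding T_def using St0 bdd clSt by (intro closed_contains_Sup) auto
  have upper: "t \<le> T" if "t \<in> St" for t unfolding T_def using that bdd by (rule cSup_upper)
  have push: "\<exists>t'>t. g t' \<in> \<Omega>" if gi: "g t \<in> interior \<Omega>" for t
  proof -
    obtain e where e: "e > 0" "ball (g t) e \<subseteq> \<Omega>" using gi mem_interior by metis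
    define t' where "t' = t + e / (2 * norm (y - x))"
    have gd: "g t' - g t = (e / (2 * norm (y - x))) *\<^sub>R (y - x)"
      by (simp add: g_def t'_def algebra_simps)
    have "dist (g t) (g t') = norm ((e / (2 * norm (y - x))) *\<^sub>R (y - x))"
      by (metis gd dist_commute dist_norm)
    also have "\<dots> = e / 2" using d e by simp
    finally have "g t' \<in> ball (g t) e" using e by simp
    then have "g t' \<in> \<Omega>" using e by blast
    moreover have "t' > t" using d e by (simp add: t'_def)
    ultimately show ?thesis by blast
  qed
  have T1: "T > 1"
  proof -
    have "g 1 \<in> interior \<Omega>" using y by (simp add: g_def)
    then obtain t' where "t' > 1" "g t' \<in> \<Omega>" using push by blast
    then have "t' \<in> St" by (simp add: St_def)
    then show ?thesis using \<open>t' > 1\<close> upper by fastforce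
  qed
  have gTO: "g T \<in> \<Omega>" using TSt by (simp add: St_def)
  have charac: "g t \<in> \<Omega> \<longleftrightarrow> t \<le> T" if t0: "0 \<le> t" for t
  proof
    assume "g t \<in> \<Omega>" then show "t \<le> T" using t0 upper by (simp add: St_def)
  next
    assume tT: "t \<le> T"
    have "(1 - t / T) *\<^sub>R x + (t / T) *\<^sub>R g T \<in> \<Omega>"
      using T1 t0 tT by (intro convexD[OF cvx xO gTO]) (auto simp: divide_le_eq)
    moreover have "(1 - t / T) *\<^sub>R x + (t / T) *\<^sub>R g T = g t"
      using T1 by (simp add: g_def algebra_simps)
    ultimately show "g t \<in> \<Omega>" by simp
  qed
  have gTnint: "g T \<notin> interior \<Omega>"
  proof
    assume "g T \<in> interior \<Omega>"
    then obtain t' where "t' > T" "g t' \<in> \<Omega>" using push by blast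
    then have "t' \<in> St" using T1 by (simp add: St_def)
    then show False using \<open>t' > T\<close> upper by fastforce
  qed
  have gTfr: "g T \<in> frontier \<Omega>"
    using gTO gTnint clO by (simp add: frontier_def closure_closed)
  have uniq: "z = g T" if "z \<in> frontier \<Omega> \<and> (\<exists>s>0. z = x + s *\<^sub>R (y - x))" for z
  proof -
    from that obtain s where zf: "z \<in> frontier \<Omega>" and s0: "s > 0" and zs: "z = g s"
      by (auto simp: g_def)
    have "z \<in> \<Omega>" using zf clO frontier_subset_closed by blast
    then have sT: "s \<le> T" using charac[of s] s0 zs by simp
    show ?thesis
    proof (cases "s = T")
      case True then show ?thesis using zs by simp
    next
      case False
      then have sT': "s < T" using sT by simp
      have xgT: "x \<noteq> g T" using T1 xy by (simp add: g_def)
      have "g s = (1 - s / T) *\<^sub>R x + (s / T) *\<^sub>R g T"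
        using T1 by (simp add: g_def algebra_simps)
      then have "g s \<in> open_segment x (g T)"
        unfolding in_segment using xgT s0 sT' T1
        by (intro conjI exI[of _ "s / T"]) (simp_all add: divide_less_eq)
      then have "g s \<in> interior \<Omega>"
        using in_interior_closure_convex_segment[OF cvx x] gTO closure_subset by blast
      then show ?thesis using zf zs by (simp add: frontier_def)
    qed
  qed
  have "ray_exit \<Omega> x y = g T"
    unfolding ray_exit_def
  proof (rule the_equality)
    show "g T \<in> frontier \<Omega> \<and> (\<exists>t>0. g T = x + t *\<^sub>R (y - x))"
    proof
      show "g T \<in> frontier \<Omega>" by (rule gTfr)
      show "\<exists>t>0. g T = x + t *\<^sub>R (y - x)" using T1 by (intro exI[of _ T]) (simp add: g_def)
    qed
  next
    fix z assume "z \<in> frontier \<Omega> \<and> (\<exists>t>0. z = x + t *\<^sub>R (y - x))"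
    then show "z = g T" by (rule uniq)
  qed
  then show ?thesis using that[OF T1] charac by (simp add: g_def)
qed

lemma funk_le_iff:
  fixes \<Omega> :: "(real^2) set"
  assumes cvx: "convex \<Omega>" and cpt: "compact \<Omega>" and x: "x \<in> interior \<Omega>"
    and y: "y \<in> interior \<Omega>" and r: "r > 0"
  shows "funk \<Omega> x y \<le> r \<longleftrightarrow> x + (exp r / (exp r - 1)) *\<^sub>R (y - x) \<in> \<Omega>"
proof (cases "x = y")
  case True
  then show ?thesis using x interior_subset r by (auto simp: funk_def)
next
  case False
  obtain T where T1: "T > 1" and re: "ray_exit \<Omega> x y = x + T *\<^sub>R (y - x)"
    and ch: "\<And>t. 0 \<le> t \<Longrightarrow> x + t *\<^sub>R (y - x) \<in> \<Omega> \<longleftrightarrow> t \<le> T"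
    using ray_exit_char[OF cvx cpt x y False] by blast
  define d where "d = norm (y - x)"
  have d: "d > 0" using False by (simp add: d_def)
  have n1: "norm (x - ray_exit \<Omega> x y) = T * d"
  proof -
    have "x - ray_exit \<Omega> x y = (- T) *\<^sub>R (y - x)" by (simp add: re)
    then show ?thesis using T1 by (simp add: d_def)
  qed
  have n2: "norm (y - ray_exit \<Omega> x y) = (T - 1) * d"
  proof -
    have "y - ray_exit \<Omega> x y = (1 - T) *\<^sub>R (y - x)" by (simp add: re algebra_simps)
    then show ?thesis using T1 by (simp add: d_def)
  qed
  have fe: "funk \<Omega> x y = ln (T / (T - 1))"
    using False n1 n2 d by (simp add: funk_def)
  define E where "E = exp r"
  have E1: "E > 1" using r by (simp add: E_def)
  have pos: "T / (T - 1) > 0" using T1 by simp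
  have "funk \<Omega> x y \<le> r \<longleftrightarrow> ln (T / (T - 1)) \<le> ln E" by (simp add: fe E_def)
  also have "\<dots> \<longleftrightarrow> T / (T - 1) \<le> E" using pos E1 by simp
  also have "\<dots> \<longleftrightarrow> T \<le> E * (T - 1)" using T1 by (simp add: pos_divide_le_eq)
  also have "\<dots> \<longleftrightarrow> E \<le> T * (E - 1)" by (simp add: algebra_simps)
  also have "\<dots> \<longleftrightarrow> E / (E - 1) \<le> T" using E1 by (simp add: pos_divide_le_eq)
  also have "\<dots> \<longleftrightarrow> x + (E / (E - 1)) *\<^sub>R (y - x) \<in> \<Omega>"
    using E1 by (intro ch[symmetric]) simp
  finally show ?thesis by (simp add: E_def)
qed


lemma interior_from_stretch:
  fixes \<Omega> :: "(real^2) set"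
  assumes cvx: "convex \<Omega>" and p: "p \<in> interior \<Omega>" and c: "c > 1"
    and w: "p + c *\<^sub>R (q - p) \<in> \<Omega>"
  shows "q \<in> interior \<Omega>"
proof (cases "q = p")
  case True then show ?thesis using p by simp
next
  case False
  define w' where "w' = p + c *\<^sub>R (q - p)"
  have pw: "p \<noteq> w'" using False c by (simp add: w'_def)
  have "q = (1 - 1 / c) *\<^sub>R p + (1 / c) *\<^sub>R w'"
    using c by (simp add: w'_def algebra_simps)
  then have "q \<in> open_segment p w'"
    unfolding in_segment using pw c
    by (intro conjI exI[of _ "1 / c"]) simp_all
  moreover have "w' \<in> closure \<Omega>" using w closure_subset by (auto simp: w'_def)
  ultimately show ?thesis
    using in_interior_closure_convex_segment[OF cvx p] by blast
qed

lemma halfspace_vimage: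
  fixes a p :: "real^2"
  assumes "a \<noteq> 0" "k \<noteq> 0"
  shows "\<exists>a' b'. a' \<noteq> 0 \<and> (\<lambda>q. p + k *\<^sub>R (q - p)) -` {x. a \<bullet> x \<le> b} = {x. a' \<bullet> x \<le> b'}"
proof (intro exI conjI)
  show "k *\<^sub>R a \<noteq> 0" using assms by simp
  show "(\<lambda>q. p + k *\<^sub>R (q - p)) -` {x. a \<bullet> x \<le> b} = {x. (k *\<^sub>R a) \<bullet> x \<le> b - a \<bullet> p + k * (a \<bullet> p)}"
    by (auto simp: inner_simps algebra_simps)
qed

theorem mainTheorem1:
  fixes \<Omega> :: "(real^2) set" and m :: nat and p :: "real^2" and r :: real
  assumes "convex_polygon \<Omega> m"
    and "p \<in> interior \<Omega>"
    and "r > 0"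
  shows "dball \<Omega> thompson p r = dball \<Omega> funk p r \<inter> dball \<Omega> reverse_funk p r
       \<and> (\<exists>k\<le>2 * m. convex_polygon (dball \<Omega> thompson p r) k)"
proof -
  have polyO: "polytope \<Omega>" and affO: "aff_dim \<Omega> = 2" and cardO: "card {F. F facet_of \<Omega>} = m"
    using assms(1) by (simp_all add: convex_polygon_def)
  have cvx: "convex \<Omega>" using polyO by (rule polytope_imp_convex)
  have cpt: "compact \<Omega>" using polyO by (rule polytope_imp_compact)
  have p: "p \<in> interior \<Omega>" by (rule assms(2))
  have pO: "p \<in> \<Omega>" using p interior_subset by blast
  define c where "c = exp r / (exp r - 1)"
  have E1: "exp r > 1" using assms(3) by simp
  have c1: "c > 1" using E1 by (simp add: c_def)
  define f1 where "f1 q = p + c *\<^sub>R (q - p)" for q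
  define f2 where "f2 q = p + (1 - c) *\<^sub>R (q - p)" for q
  have f2alt: "f2 q = q + c *\<^sub>R (p - q)" for q by (simp add: f2_def algebra_simps)
  have part1: "dball \<Omega> thompson p r = dball \<Omega> funk p r \<inter> dball \<Omega> reverse_funk p r"
    by (auto simp: dball_def thompson_def)
  define D where "D = dball \<Omega> thompson p r"
  have Deq: "D = f1 -` \<Omega> \<inter> f2 -` \<Omega>"
  proof (rule set_eqI)
    fix q
    show "q \<in> D \<longleftrightarrow> q \<in> f1 -` \<Omega> \<inter> f2 -` \<Omega>"
    proof
      assume "q \<in> D"
      then have q: "q \<in> interior \<Omega>" and h1: "funk \<Omega> p q \<le> r" and h2: "funk \<Omega> q p \<le> r"
        by (auto simp: D_def dball_def thompson_def reverse_funk_def)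
      have "f1 q \<in> \<Omega>" using h1 funk_le_iff[OF cvx cpt p q assms(3)] by (simp add: f1_def c_def)
      moreover have "f2 q \<in> \<Omega>" using h2 funk_le_iff[OF cvx cpt q p assms(3)] by (simp add: f2alt c_def)
      ultimately show "q \<in> f1 -` \<Omega> \<inter> f2 -` \<Omega>" by simp
    next
      assume "q \<in> f1 -` \<Omega> \<inter> f2 -` \<Omega>"
      then have a1: "f1 q \<in> \<Omega>" and a2: "f2 q \<in> \<Omega>" by auto
      have q: "q \<in> interior \<Omega>" using interior_from_stretch[OF cvx p c1] a1 by (simp add: f1_def)
      have h1: "funk \<Omega> p q \<le> r" using a1 funk_le_iff[OF cvx cpt p q assms(3)] by (simp add: f1_def c_def)
      have h2: "funk \<Omega> q p \<le> r" using a2 funk_le_iff[OF cvx cpt q p assms(3)] by (simp add: f2alt c_def)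
      show "q \<in> D" using q h1 h2 by (simp add: D_def dball_def thompson_def reverse_funk_def)
    qed
  qed
  have DsubO: "D \<subseteq> \<Omega>" using interior_subset by (auto simp: D_def dball_def)
  have One: "\<Omega> \<noteq> {}" using pO by blast
  obtain H where finH: "finite H" and seqO: "\<Omega> = affine hull \<Omega> \<inter> \<Inter>H"
    and hsH: "\<forall>h\<in>H. \<exists>a b. a \<noteq> 0 \<and> h = {x. a \<bullet> x \<le> b}"
    and cardH: "card H \<le> card {C. C facet_of \<Omega>}"
    using facet_rep[OF polytope_imp_polyhedron[OF polyO] One] by blast
  have "affine hull \<Omega> = UNIV" using affO aff_dim_eq_full[of \<Omega>] by simp
  then have OH: "\<Omega> = \<Inter>H" using seqO by simp
  define HA where "HA = (\<lambda>h. f1 -` h) ` H"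
  define HB where "HB = (\<lambda>h. f2 -` h) ` H"
  have hsAB: "\<forall>h\<in>HA \<union> HB. \<exists>a b. a \<noteq> 0 \<and> h = {x. a \<bullet> x \<le> b}"
  proof
    fix h assume "h \<in> HA \<union> HB"
    then obtain k where kH: "k \<in> H" and hk: "h = f1 -` k \<or> h = f2 -` k"
      by (auto simp: HA_def HB_def)
    from kH hsH obtain a b where ab: "a \<noteq> 0" "k = {x. a \<bullet> x \<le> b}" by blast
    have c0: "c \<noteq> 0" "1 - c \<noteq> 0" using c1 by simp_all
    show "\<exists>a b. a \<noteq> 0 \<and> h = {x. a \<bullet> x \<le> b}"
      using hk
    proof
      assume "h = f1 -` k"
      then show ?thesis using halfspace_vimage[OF ab(1) c0(1), of p b] ab(2)
        by (simp add: f1_def)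
    next
      assume "h = f2 -` k"
      then show ?thesis using halfspace_vimage[OF ab(1) c0(2), of p b] ab(2)
        by (simp add: f2_def)
    qed
  qed
  have finAB: "finite (HA \<union> HB)" using finH by (simp add: HA_def HB_def)
  have DI: "D = \<Inter>(HA \<union> HB)"
    unfolding Deq HA_def HB_def by (simp only: OH) blast
  have polyD: "polyhedron D"
    unfolding polyhedron_def using finAB DI hsAB by blast
  have bD: "bounded D" using DsubO compact_imp_bounded[OF cpt] bounded_subset by blast
  have polytD: "polytope D" using polyD bD by (simp add: polytope_eq_bounded_polyhedron)
  have "p \<in> interior D"
  proof -
    define U where "U = f1 -` interior \<Omega> \<inter> f2 -` interior \<Omega>"
    have c1': "continuous_on UNIV f1" "continuous_on UNIV f2"
      unfolding f1_def f2_def by (intro continuous_intros)+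
    have "open U" unfolding U_def
      by (intro open_Int open_vimage open_interior c1')
    moreover have "U \<subseteq> D" unfolding U_def Deq using interior_subset by blast
    moreover have "p \<in> U" using p by (simp add: U_def f1_def f2_def)
    ultimately show ?thesis using interior_maximal by blast
  qed
  then have affD: "aff_dim D = 2"
    using aff_dim_nonempty_interior[of D] by auto
  have "D \<subseteq> affine hull D" by (rule hull_subset)
  then have seqD: "D = affine hull D \<inter> \<Inter>(HA \<union> HB)" using DI by blast
  have "card {C. C facet_of D} \<le> card (HA \<union> HB)"
    by (rule facets_card_le[OF finAB seqD hsAB])
  also have "\<dots> \<le> card HA + card HB" by (rule card_Un_le)
  also have "\<dots> \<le> card H + card H"
    unfolding HA_def HB_def by (intro add_mono card_image_le finH)
  also have "\<dots> \<le> 2 * m" using cardH cardO by simp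
  finally have ck: "card {C. C facet_of D} \<le> 2 * m" .
  have "convex_polygon D (card {C. C facet_of D})"
    using polytD affD by (simp add: convex_polygon_def)
  then show ?thesis using part1 ck unfolding D_def by blast
qed

end
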